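(* Let $\Gamma_1=(V_1,E_1)$ be a simple undirected graph with a strong edge coloring $\mathcal{E}_1$ with colors from $\mathcal{S}^\circ$, and let $\Gamma_2=(V_2,W_2,E_2)$ be a bipartite graph with a strong edge coloring $\mathcal{E}_2$ with colors from $\mathcal{S}_2$. Let $\mathcal{S}_\circ$ be a set disjoint from $\mathcal{S}^\circ$ with a bijection $\sigma:\mathcal{S}^\circ\to\mathcal{S}_\circ$, and let $\mathcal{E}^\circ,\mathcal{E}_\circ$ be opposing orientations of $\mathcal{E}_1$ with colors from $\mathcal{S}^\circ$ and $\mathcal{S}_\circ$ respectively: for each edge $\{x,u\}\in E_1$ of color $s$, one chosen direction $\langle x,u\rangle$ receives $(\langle x,u\rangle,s)\in\mathcal{E}^\circ$ and the reverse direction receives $(\langle u,x\rangle,\sigma(s))\in\mathcal{E}_\circ$. Let $\mathcal{V}$ be a proper vertex coloring of $\Gamma_1$ with colors from a set $\mathcal{S}'$ disjoint from $\mathcal{S}^\circ\cup\mathcal{S}_\circ$. Let $\Gamma=\Gamma_1:\Gamma_2$ be the bipartite graph with vertex classes $V_1\times V_2$ and $V_1\times W_2$ and edge set $E=\{((x,y),(u,v)) : (y,v)\in E_2, \text{ and } x=u \text{ or } \{x,u\}\in E_1\}$. Then $$\mathcal{E}=\{((x,y),(u,v),(s,s_2)) : (y,v,s_2)\in\mathcal{E}_2; \text{ and either } x=u \text{ with } (x,s)\in\mathcal{V}, \text{ or } (\langle x,u\rangle,s)\in\mathcal{E}^\circ\cup\mathcal{E}_\circ\}$$ is a strong edge coloring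 of $\Gamma$ with colors from $(\mathcal{S}'\cup\mathcal{S}^\circ\cup\mathcal{S}_\circ)\times\mathcal{S}_2$.
   Context: A vertex coloring is written as a set of pairs $(v,s)$, $v$ a vertex and $s$ its color; proper means adjacent vertices get different colors. $\langle x,u\rangle$ denotes the directed edge $x\to u$. For an undirected graph, an edge coloring assigns one color to each edge so that edges sharing a vertex get different colors; it is a strong edge coloring if in addition no two distinct edges of the same color are both adjacent to (share a vertex with) a common edge, i.e. each color class is an induced matching. A bipartite graph is written $(V,W,E)$ with $V\cap W=\emptyset$, $E\subseteq V\times W$, and an edge coloring of it is written as a set of triples $(v,w,s)$ with each edge occurring with exactly one color; the strong condition is the same: if $(v,w,s),(v',w',s)$ are distinct then $v\neq v'$, $w\ne w'$, and neither $(v,w')$ nor $(v',w)$ is an edge. *)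

theory Defs
  imports Main
begin

definition simple_graph :: "'a set \<Rightarrow> 'a set set \<Rightarrow> bool" where
  "simple_graph V E \<longleftrightarrow> (\<forall>e\<in>E. e \<subseteq> V \<and> card e = 2)"

definition strong_edge_coloring :: "'a set set \<Rightarrow> ('a set \<times> 'c) set \<Rightarrow> 'c set \<Rightarrow> bool" where
  "strong_edge_coloring E C S \<longleftrightarrow>
     (\<forall>(e,s)\<in>C. e \<in> E \<and> s \<in> S) \<and>
     (\<forall>e\<in>E. \<exists>!s. (e,s) \<in> C) \<and>
     (\<forall>e e' s. (e,s) \<in> C \<longrightarrow> (e',s) \<in> C \<longrightarrow> e \<noteq> e' \<longrightarrow>
        e \<inter> e' = {} \<and> \<not> (\<exists>f\<in>E. f \<inter> e \<noteq> {} \<and> f \<inter> e' \<noteq> {}))"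

definition bipartite_graph :: "'a set \<Rightarrow> 'a set \<Rightarrow> ('a \<times> 'a) set \<Rightarrow> bool" where
  "bipartite_graph V W E \<longleftrightarrow> V \<inter> W = {} \<and> E \<subseteq> V \<times> W"

definition bip_strong_edge_coloring ::
  "('a \<times> 'a) set \<Rightarrow> ('a \<times> 'a \<times> 'c) set \<Rightarrow> 'c set \<Rightarrow> bool" where
  "bip_strong_edge_coloring E C S \<longleftrightarrow>
     (\<forall>(v,w,s)\<in>C. (v,w) \<in> E \<and> s \<in> S) \<and>
     (\<forall>(v,w)\<in>E. \<exists>!s. (v,w,s) \<in> C) \<and>
     (\<forall>v w v' w' s. (v,w,s) \<in> C \<longrightarrow> (v',w',s) \<in> C \<longrightarrow> (v,w) \<noteq> (v',w') \<longrightarrow>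
        v \<noteq> v' \<and> w \<noteq> w' \<and> (v,w') \<notin> E \<and> (v',w) \<notin> E)"

definition opposing_orientations ::
  "('a set \<times> 'c) set \<Rightarrow> ('c \<Rightarrow> 'c) \<Rightarrow> (('a \<times> 'a) \<times> 'c) set \<Rightarrow> (('a \<times> 'a) \<times> 'c) set \<Rightarrow> bool" where
  "opposing_orientations C \<sigma> Eo Eu \<longleftrightarrow>
     (\<forall>((x,u),s)\<in>Eo. ({x,u},s) \<in> C) \<and>
     (\<forall>x u s. ({x,u},s) \<in> C \<longrightarrow> (((x,u),s) \<in> Eo \<longleftrightarrow> ((u,x),s) \<notin> Eo)) \<and>
     Eu = {((u,x), \<sigma> s) | x u s. ((x,u),s) \<in> Eo}"

definition proper_vertex_coloring :: "'a set \<Rightarrow> 'a set set \<Rightarrow> ('a \<times> 'c) set \<Rightarrow> 'c set \<Rightarrow> bool" where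
  "proper_vertex_coloring V E C S \<longleftrightarrow>
     (\<forall>(v,s)\<in>C. v \<in> V \<and> s \<in> S) \<and>
     (\<forall>v\<in>V. \<exists>!s. (v,s) \<in> C) \<and>
     (\<forall>x u s t. {x,u} \<in> E \<longrightarrow> (x,s) \<in> C \<longrightarrow> (u,t) \<in> C \<longrightarrow> s \<noteq> t)"

definition colon_product_edges ::
  "'a set \<Rightarrow> 'a set set \<Rightarrow> ('b \<times> 'b) set \<Rightarrow> (('a \<times> 'b) \<times> ('a \<times> 'b)) set" where
  "colon_product_edges V1 E1 E2 =
     {((x,y),(u,v)). (y,v) \<in> E2 \<and> x \<in> V1 \<and> u \<in> V1 \<and> (x = u \<or> {x,u} \<in> E1)}"

end

theory Submission
  imports Defs
begin

theorem lemma5p1: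
  fixes V1 :: "'a set" and E1 :: "'a set set" and C1 :: "('a set \<times> 'c) set"
    and V2 W2 :: "'b set" and E2 :: "('b \<times> 'b) set" and C2 :: "('b \<times> 'b \<times> 'd) set"
    and S_up S_low S' :: "'c set" and S2 :: "'d set" and \<sigma> :: "'c \<Rightarrow> 'c"
    and Eo Eu :: "(('a \<times> 'a) \<times> 'c) set" and VC :: "('a \<times> 'c) set"
  assumes "simple_graph V1 E1"
    and "strong_edge_coloring E1 C1 S_up"
    and "bipartite_graph V2 W2 E2"
    and "bip_strong_edge_coloring E2 C2 S2"
    and "S_up \<inter> S_low = {}"
    and "bij_betw \<sigma> S_up S_low"
    and "opposing_orientations C1 \<sigma> Eo Eu"
    and "proper_vertex_coloring V1 E1 VC S'"
    and "S' \<inter> (S_up \<union> S_low) = {}"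
  shows "bip_strong_edge_coloring (colon_product_edges V1 E1 E2)
           {((x,y),(u,v),(s,s2)) | x y u v s s2. (y,v,s2) \<in> C2 \<and>
              ((x = u \<and> (x,s) \<in> VC) \<or> ((x,u),s) \<in> Eo \<union> Eu)}
           ((S' \<union> S_up \<union> S_low) \<times> S2)"
proof -
  have sg: "\<forall>e\<in>E1. e \<subseteq> V1 \<and> card e = 2" using assms(1) unfolding simple_graph_def .
  note sc = assms(2)[unfolded strong_edge_coloring_def]
  note sc1 = sc[THEN conjunct1]
  note sc2 = sc[THEN conjunct2, THEN conjunct1]
  note sc3 = sc[THEN conjunct2, THEN conjunct2]
  note bc = assms(4)[unfolded bip_strong_edge_coloring_def]
  note bc1 = bc[THEN conjunct1]
  note bc2 = bc[THEN conjunct2, THEN conjunct1]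
  note bc3 = bc[THEN conjunct2, THEN conjunct2]
  note oo = assms(7)[unfolded opposing_orientations_def]
  note oo1 = oo[THEN conjunct1]
  note oo2 = oo[THEN conjunct2, THEN conjunct1]
  note oo3 = oo[THEN conjunct2, THEN conjunct2]
  note pv = assms(8)[unfolded proper_vertex_coloring_def]
  note pv1 = pv[THEN conjunct1]
  note pv2 = pv[THEN conjunct2, THEN conjunct1]
  note pv3 = pv[THEN conjunct2, THEN conjunct2]
  have injs: "inj_on \<sigma> S_up" and img: "\<sigma> ` S_up = S_low" using assms(6) by (auto simp: bij_betw_def)
  have EoC: "({x,u},s) \<in> C1" if "((x,u),s) \<in> Eo" for x u s using oo1 that by fast
  have Eu: "((x,u),s) \<in> Eu \<longleftrightarrow> (\<exists>t. ((u,x),t) \<in> Eo \<and> s = \<sigma> t)" for x u s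
    unfolding oo3 by blast
  have xor: "((x,u),s) \<in> Eo \<longleftrightarrow> ((u,x),s) \<notin> Eo" if "({x,u},s) \<in> C1" for x u s
    using oo2 that by blast
  have C1E: "{x,u} \<in> E1 \<and> s \<in> S_up" if "({x,u},s) \<in> C1" for x u s using sc1 that by fast
  have E1V: "x \<in> V1 \<and> u \<in> V1 \<and> x \<noteq> u" if "{x,u} \<in> E1" for x u
  proof -
    have "{x,u} \<subseteq> V1" "card {x,u} = 2" using sg that by auto
    then show ?thesis by (cases "x = u") auto
  qed
  have C1u: "s = s'" if "(e,s) \<in> C1" "(e,s') \<in> C1" for e s s' using sc1 sc2 that by fast
  have C1s: "e \<inter> e' = {} \<and> \<not> (\<exists>f\<in>E1. f \<inter> e \<noteq> {} \<and> f \<inter> e' \<noteq> {})"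
    if "(e,s) \<in> C1" "(e',s) \<in> C1" "e \<noteq> e'" for e e' s using sc3 that by blast
  have VCp: "x \<in> V1 \<and> s \<in> S'" if "(x,s) \<in> VC" for x s using pv1 that by fast
  have VCu: "s = s'" if "(x,s) \<in> VC" "(x,s') \<in> VC" for x s s'
    using pv2 that VCp[OF that(1)] by fast
  have VCe: "\<exists>s. (x,s) \<in> VC" if "x \<in> V1" for x using pv2 that by fast
  have VCprop: "{x,u} \<notin> E1" if "(x,s) \<in> VC" "(u,s) \<in> VC" for x u s using pv3 that by blast
  define P where "P x u s \<longleftrightarrow> (x = u \<and> (x,s) \<in> VC) \<or> ((x,u),s) \<in> Eo \<union> Eu" for x u s
  have Eo_info: "{x,u} \<in> E1 \<and> s \<in> S_up \<and> x \<in> V1 \<and> u \<in> V1 \<and> x \<noteq> u" if "((x,u),s) \<in> Eo" for x u s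
    using C1E[OF EoC[OF that]] E1V by blast
  have Eu_info: "{x,u} \<in> E1 \<and> s \<in> S_low \<and> x \<in> V1 \<and> u \<in> V1 \<and> x \<noteq> u" if h: "((x,u),s) \<in> Eu" for x u s
  proof -
    obtain t where t: "((u,x),t) \<in> Eo" "s = \<sigma> t" using Eu[THEN iffD1, OF h] by blast
    have i: "{u,x} \<in> E1" "t \<in> S_up" "u \<in> V1" "x \<in> V1" "u \<noteq> x" using Eo_info[OF t(1)] by auto
    have "{x,u} = {u,x}" by (rule insert_commute)
    moreover have "s \<in> S_low" using t(2) i(2) img by blast
    ultimately show ?thesis using i by simp
  qed
  have Pinfo: "(x \<in> V1 \<and> u \<in> V1 \<and> (x = u \<or> {x,u} \<in> E1)) \<and> s \<in> S' \<union> S_up \<union> S_low" if hP: "P x u s" for x u s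
  proof -
    consider "x = u" "(x,s) \<in> VC" | "((x,u),s) \<in> Eo" | "((x,u),s) \<in> Eu" using hP unfolding P_def by blast
    then show ?thesis
    proof cases
      case 1 then show ?thesis using VCp[OF 1(2)] by simp
    next
      case 2 then show ?thesis using Eo_info[OF 2] by simp
    next
      case 3 then show ?thesis using Eu_info[OF 3] by simp
    qed
  qed
  have Eo_pair: "x \<noteq> x' \<and> u \<noteq> u' \<and> x \<noteq> u' \<and> x' \<noteq> u \<and> {x,u'} \<notin> E1 \<and> {x',u} \<notin> E1"
    if h1: "((x,u),t) \<in> Eo" and h2: "((x',u'),t) \<in> Eo" and h3: "(x,u) \<noteq> (x',u')" for x u x' u' t
  proof -
    have c: "({x,u},t) \<in> C1" "({x',u'},t) \<in> C1" using EoC[OF h1] EoC[OF h2] .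
    have ne: "{x,u} \<noteq> {x',u'}"
    proof
      assume eq: "{x,u} = {x',u'}"
      then have xx: "x' = u \<and> u' = x" using h3 doubleton_eq_iff[of x u x' u'] by blast
      then have "((u,x),t) \<in> Eo" using h2 by simp
      then show False using xor[OF c(1)] h1 by blast
    qed
    have C: "{x,u} \<inter> {x',u'} = {} \<and> \<not> (\<exists>f\<in>E1. f \<inter> {x,u} \<noteq> {} \<and> f \<inter> {x',u'} \<noteq> {})"
      using C1s[OF c ne] .
    have d1: "{x,u} \<inter> {x',u'} = {}" using C by (rule conjunct1)
    have d2: "\<And>f. f \<in> E1 \<Longrightarrow> f \<inter> {x,u} = {} \<or> f \<inter> {x',u'} = {}"
      using C by blast
    have n: "x \<noteq> x'" "u \<noteq> u'" "x \<noteq> u'" "x' \<noteq> u" using d1 by auto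
    have e1: "{x,u'} \<notin> E1"
    proof
      assume "{x,u'} \<in> E1"
      from d2[OF this] show False by auto
    qed
    have e2: "{x',u} \<notin> E1"
    proof
      assume "{x',u} \<in> E1"
      from d2[OF this] show False by auto
    qed
    show ?thesis using n e1 e2 by blast
  qed
  have key: "x \<noteq> x' \<and> u \<noteq> u' \<and> \<not>(x = u' \<or> {x,u'} \<in> E1) \<and> \<not>(x' = u \<or> {x',u} \<in> E1)"
    if hk1: "P x u s" and hk2: "P x' u' s" and hk3: "(x,u) \<noteq> (x',u')" for x u x' u' s
  proof -
    have dj1: "s \<notin> S' \<or> s \<notin> S_up" "s \<notin> S' \<or> s \<notin> S_low" "s \<notin> S_up \<or> s \<notin> S_low"
      using assms(5,9) by auto
    have P2: "x' = u' \<and> (x',s) \<in> VC \<or> ((x',u'),s) \<in> Eo \<or> ((x',u'),s) \<in> Eu"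
      using hk2 unfolding P_def by blast
    consider (v) "x = u \<and> (x,s) \<in> VC" | (o) "((x,u),s) \<in> Eo" | (w) "((x,u),s) \<in> Eu"
      using hk1 unfolding P_def by blast
    then show ?thesis
    proof cases
      case v
      then have "x' = u' \<and> (x',s) \<in> VC"
        using P2 VCp[of x s] Eo_info[of x' u' s] Eu_info[of x' u' s] dj1 by blast
      moreover have "x \<noteq> x'" using v hk3 calculation by auto
      moreover have "{x,x'} \<notin> E1" "{x',x} \<notin> E1" using v calculation VCprop by blast+
      ultimately show ?thesis using v by blast
    next
      case o
      then have "((x',u'),s) \<in> Eo"
        using P2 VCp[of x' s] Eo_info[of x u s] Eu_info[of x' u' s] dj1 by blast
      then show ?thesis using Eo_pair[OF o _ hk3] by blast
    next
      case w
      then have w2: "((x',u'),s) \<in> Eu"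
        using P2 VCp[of x' s] Eo_info[of x' u' s] Eu_info[of x u s] dj1 by blast
      obtain t where t: "((u,x),t) \<in> Eo" "s = \<sigma> t" using Eu[THEN iffD1, OF w] by blast
      obtain t' where t': "((u',x'),t') \<in> Eo" "s = \<sigma> t'" using Eu[THEN iffD1, OF w2] by blast
      have "t \<in> S_up" "t' \<in> S_up" using Eo_info t(1) t'(1) by blast+
      then have "t = t'" using injs t(2) t'(2) unfolding inj_on_def by blast
      then have tt: "((u',x'),t) \<in> Eo" using t' by simp
      have "(u,x) \<noteq> (u',x')" using hk3 by auto
      then have "u \<noteq> u' \<and> x \<noteq> x' \<and> u \<noteq> x' \<and> u' \<noteq> x \<and> {u,x'} \<notin> E1 \<and> {u',x} \<notin> E1"
        using Eo_pair[OF t(1) tt] by blast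
      then show ?thesis by (auto simp add: insert_commute)
    qed
  qed
  have uniqP: "s = s'" if "P x u s" "P x u s'" for x u s s'
  proof (cases "x = u")
    case True
    have "((x,x),r) \<notin> Eo \<union> Eu" for r using Eo_info Eu_info by blast
    then show ?thesis using that True VCu unfolding P_def by blast
  next
    case False
    have "((x,u),s) \<in> Eo \<union> Eu" "((x,u),s') \<in> Eo \<union> Eu" using that False P_def by auto
    then show ?thesis
    proof (elim UnE)
      assume a: "((x,u),s) \<in> Eo" "((x,u),s') \<in> Eo"
      then show ?thesis using C1u EoC by blast
    next
      assume a: "((x,u),s) \<in> Eo" "((x,u),s') \<in> Eu"
      obtain t where t: "((u,x),t) \<in> Eo" using Eu[THEN iffD1, OF a(2)] by blast
      have "({x,u},s) \<in> C1" "({u,x},t) \<in> C1" using a t EoC by auto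
      then have "t = s" using C1u by (metis insert_commute)
      then show ?thesis using xor[OF EoC[OF a(1)]] a t by blast
    next
      assume a: "((x,u),s) \<in> Eu" "((x,u),s') \<in> Eo"
      obtain t where t: "((u,x),t) \<in> Eo" using Eu[THEN iffD1, OF a(1)] by blast
      have "({x,u},s') \<in> C1" "({u,x},t) \<in> C1" using a t EoC by auto
      then have "t = s'" using C1u by (metis insert_commute)
      then show ?thesis using xor[OF EoC[OF a(2)]] a t by blast
    next
      assume a: "((x,u),s) \<in> Eu" "((x,u),s') \<in> Eu"
      obtain t where t: "((u,x),t) \<in> Eo" "s = \<sigma> t" using Eu[THEN iffD1, OF a(1)] by blast
      obtain t' where t': "((u,x),t') \<in> Eo" "s' = \<sigma> t'" using Eu[THEN iffD1, OF a(2)] by blast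
      have "t = t'" using C1u EoC t t' by blast
      then show ?thesis using t t' by simp
    qed
  qed
  have existsP: "\<exists>s. P x u s" if "x \<in> V1" "u \<in> V1" "x = u \<or> {x,u} \<in> E1" for x u
  proof (cases "x = u")
    case True then show ?thesis using VCe that P_def by blast
  next
    case False
    then have e: "{x,u} \<in> E1" using that by auto
    then obtain s where s: "({x,u},s) \<in> C1" using sc2 by fast
    show ?thesis
    proof (cases "((x,u),s) \<in> Eo")
      case True then show ?thesis using P_def by blast
    next
      case False
      then have "((u,x),s) \<in> Eo" using xor[OF s] by blast
      then have "((x,u),\<sigma> s) \<in> Eu" using Eu[THEN iffD2] by blast
      then show ?thesis using P_def by blast
    qed
  qed
  have Cset: "{((x,y),(u,v),(s,s2)) | x y u v s s2. (y,v,s2) \<in> C2 \<and>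
              ((x = u \<and> (x,s) \<in> VC) \<or> ((x,u),s) \<in> Eo \<union> Eu)}
     = {((x,y),(u,v),(s,s2)) | x y u v s s2. (y,v,s2) \<in> C2 \<and> P x u s}"
    unfolding P_def ..
  define CC where "CC = {((x,y),(u,v),(s,s2)) | x y u v s s2. (y,v,s2) \<in> C2 \<and> P x u s}"
  have CCmem: "((x,y),(u,v),c) \<in> CC \<longleftrightarrow> (\<exists>s s2. c = (s,s2) \<and> (y,v,s2) \<in> C2 \<and> P x u s)" for x y u v c
    unfolding CC_def by blast
  have ex1: "\<exists>!c. ((x,y),(u,v),c) \<in> CC"
    if h: "(y,v) \<in> E2" "x \<in> V1" "u \<in> V1" "x = u \<or> {x,u} \<in> E1" for x y u v
  proof -
      obtain s where s: "P x u s" using existsP h by blast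
      obtain s2 where s2: "(y,v,s2) \<in> C2" using bc2 h(1) by fast
      show ?thesis unfolding CCmem
      proof (rule ex1I[of _ "(s,s2)"])
        show "\<exists>s' s2'. (s,s2) = (s', s2') \<and> (y, v, s2') \<in> C2 \<and> P x u s'" using s s2 by blast
      next
        fix c assume "\<exists>s s2. c = (s, s2) \<and> (y, v, s2) \<in> C2 \<and> P x u s"
        then obtain s' s2' where c: "c = (s',s2')" "(y,v,s2') \<in> C2" "P x u s'" by blast
        have "s2' = s2" using bc2 c(2) s2 h(1) by fast
        moreover have "s' = s" using uniqP c(3) s by blast
        ultimately show "c = (s,s2)" using c by simp
      qed
  qed
  have str: "(x,y) \<noteq> (x',y') \<and> (u,v) \<noteq> (u',v') \<and>
          \<not> ((y, v') \<in> E2 \<and> x \<in> V1 \<and> u' \<in> V1 \<and> (x = u' \<or> {x, u'} \<in> E1)) \<and>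
          \<not> ((y', v) \<in> E2 \<and> x' \<in> V1 \<and> u \<in> V1 \<and> (x' = u \<or> {x', u} \<in> E1))"
    if h1: "((x,y),(u,v),c) \<in> CC" and h2: "((x',y'),(u',v'),c) \<in> CC"
      and ne: "((x,y),(u,v)) \<noteq> ((x',y'),(u',v'))" for x y u v x' y' u' v' c
  proof -
    obtain s s2 where a: "c = (s,s2)" "(y,v,s2) \<in> C2" "P x u s" using CCmem[THEN iffD1, OF h1] by blast
    have b: "(y',v',s2) \<in> C2" "P x' u' s" using CCmem[THEN iffD1, OF h2] a(1) by auto
    show ?thesis
    proof (cases "(y,v) = (y',v')")
      case True
      then have "(x,u) \<noteq> (x',u')" using ne by auto
      then have k: "x \<noteq> x' \<and> u \<noteq> u' \<and> \<not>(x = u' \<or> {x,u'} \<in> E1) \<and> \<not>(x' = u \<or> {x',u} \<in> E1)" using key[OF a(3) b(2)] by blast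
      show ?thesis using k by blast
    next
      case False
      then have "y \<noteq> y' \<and> v \<noteq> v' \<and> (y,v') \<notin> E2 \<and> (y',v) \<notin> E2" using bc3[rule_format, OF a(2) b(1) False] by blast
      then show ?thesis by auto
    qed
  qed
  have ok1: "((x,y),(u,v),c) \<in> CC \<Longrightarrow> (y, v) \<in> E2 \<and> x \<in> V1 \<and> u \<in> V1 \<and> (x = u \<or> {x, u} \<in> E1) \<and> c \<in> (S' \<union> S_up \<union> S_low) \<times> S2" for x y u v c
    using CCmem Pinfo bc1 by fastforce
  show ?thesis
    unfolding Cset CC_def[symmetric] bip_strong_edge_coloring_def colon_product_edges_def
  proof (intro conjI)
    show "\<forall>(a, b, c)\<in>CC. (a, b) \<in> {((x, y), u, v). (y, v) \<in> E2 \<and> x \<in> V1 \<and> u \<in> V1 \<and> (x = u \<or> {x, u} \<in> E1)} \<and>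
       c \<in> (S' \<union> S_up \<union> S_low) \<times> S2"
    proof (rule ballI)
      fix t assume t: "t \<in> CC"
      obtain x y u v c where tt: "t = ((x,y),(u,v),c)" by (cases t) auto
      show "case t of (a, b, c) \<Rightarrow> (a, b) \<in> {((x, y), u, v). (y, v) \<in> E2 \<and> x \<in> V1 \<and> u \<in> V1 \<and> (x = u \<or> {x, u} \<in> E1)} \<and>
       c \<in> (S' \<union> S_up \<union> S_low) \<times> S2"
        using ok1[of x y u v c] t unfolding tt by simp
    qed
    show "\<forall>(a, b)\<in>{((x, y), u, v). (y, v) \<in> E2 \<and> x \<in> V1 \<and> u \<in> V1 \<and> (x = u \<or> {x, u} \<in> E1)}.
       \<exists>!c. (a, b, c) \<in> CC"
    proof (rule ballI)
      fix t assume t: "t \<in> {((x, y), u, v). (y, v) \<in> E2 \<and> x \<in> V1 \<and> u \<in> V1 \<and> (x = u \<or> {x, u} \<in> E1)}"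
      obtain x y u v where tt: "t = ((x,y),(u,v))" by (cases t) auto
      show "case t of (a, b) \<Rightarrow> \<exists>!c. (a, b, c) \<in> CC"
        using ex1[of y v x u] t unfolding tt by simp
    qed
    show "\<forall>v w v' w' s. (v, w, s) \<in> CC \<longrightarrow> (v', w', s) \<in> CC \<longrightarrow> (v, w) \<noteq> (v', w') \<longrightarrow>
       v \<noteq> v' \<and> w \<noteq> w' \<and>
       (v, w') \<notin> {((x, y), u, v). (y, v) \<in> E2 \<and> x \<in> V1 \<and> u \<in> V1 \<and> (x = u \<or> {x, u} \<in> E1)} \<and>
       (v', w) \<notin> {((x, y), u, v). (y, v) \<in> E2 \<and> x \<in> V1 \<and> u \<in> V1 \<and> (x = u \<or> {x, u} \<in> E1)}"
    proof (intro allI impI)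
      fix p q p' q' c
      assume a: "(p, q, c) \<in> CC" "(p', q', c) \<in> CC" "(p, q) \<noteq> (p', q')"
      obtain x y where p: "p = (x,y)" by (cases p) auto
      obtain u v where q: "q = (u,v)" by (cases q) auto
      obtain x' y' where p': "p' = (x',y')" by (cases p') auto
      obtain u' v' where q': "q' = (u',v')" by (cases q') auto
      show "p \<noteq> p' \<and> q \<noteq> q' \<and>
       (p, q') \<notin> {((x, y), u, v). (y, v) \<in> E2 \<and> x \<in> V1 \<and> u \<in> V1 \<and> (x = u \<or> {x, u} \<in> E1)} \<and>
       (p', q) \<notin> {((x, y), u, v). (y, v) \<in> E2 \<and> x \<in> V1 \<and> u \<in> V1 \<and> (x = u \<or> {x, u} \<in> E1)}"
        using str[of x y u v c x' y' u' v'] a unfolding p q p' q' by simp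
    qed
  qed
qed

end
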